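(* Let $k \geq 1$. Every $k$-degenerate graph $G$ on $n$ vertices is $(k,b)$-colorable for every integer $b \geq 4k\sqrt{k+1}\sqrt{n}$. In other words, $\mathrm{ex}_k(\mathcal{D}_k)(n) \leq 4k\sqrt{k+1}\sqrt{n}$, where $\mathcal{D}_k$ is the class of $k$-degenerate graphs.
   Context: A graph is $k$-degenerate if every subgraph has a vertex of degree at most $k$. A set of vertices $X$ is $2$-independent if any two distinct vertices of $X$ are at distance at least $3$. A graph $G$ is $(a,b)$-colorable if $V(G)$ can be partitioned into $a$ independent sets and $b$ $2$-independent sets (some parts may be empty). For a class $\mathcal{C}$ of graphs, $\mathrm{ex}_a(\mathcal{C})(n)$ denotes the smallest integer $c$ such that every graph of order $n$ in $\mathcal{C}$ is $(a,c)$-colorable. *)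

theory Defs
  imports Complex_Main
begin

definition graph :: "'a set \<Rightarrow> ('a \<Rightarrow> 'a \<Rightarrow> bool) \<Rightarrow> bool" where
  "graph V E \<longleftrightarrow> finite V \<and> (\<forall>x y. E x y \<longrightarrow> x \<in> V \<and> y \<in> V) \<and>
     (\<forall>x y. E x y \<longrightarrow> E y x) \<and> (\<forall>x. \<not> E x x)"

definition degenerate :: "nat \<Rightarrow> 'a set \<Rightarrow> ('a \<Rightarrow> 'a \<Rightarrow> bool) \<Rightarrow> bool" where
  "degenerate k V E \<longleftrightarrow>
     (\<forall>S. S \<subseteq> V \<and> S \<noteq> {} \<longrightarrow> (\<exists>v\<in>S. card {u \<in> S. E v u} \<le> k))"

definition independent_set :: "('a \<Rightarrow> 'a \<Rightarrow> bool) \<Rightarrow> 'a set \<Rightarrow> bool" where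
  "independent_set E X \<longleftrightarrow> (\<forall>x\<in>X. \<forall>y\<in>X. \<not> E x y)"

definition two_independent_set :: "('a \<Rightarrow> 'a \<Rightarrow> bool) \<Rightarrow> 'a set \<Rightarrow> bool" where
  "two_independent_set E X \<longleftrightarrow>
     (\<forall>x\<in>X. \<forall>y\<in>X. x \<noteq> y \<longrightarrow> \<not> E x y \<and> \<not> (\<exists>z. E x z \<and> E z y))"

text \<open>(a,b)-colorable: V is partitioned into a independent sets (colours 0..a-1)
and b 2-independent sets (colours a..a+b-1); parts may be empty.\<close>
definition colorable :: "nat \<Rightarrow> nat \<Rightarrow> 'a set \<Rightarrow> ('a \<Rightarrow> 'a \<Rightarrow> bool) \<Rightarrow> bool" where
  "colorable a b V E \<longleftrightarrow>
     (\<exists>c :: 'a \<Rightarrow> nat. (\<forall>v\<in>V. c v < a + b) \<and>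
        (\<forall>i<a. independent_set E {v \<in> V. c v = i}) \<and>
        (\<forall>i. a \<le> i \<and> i < a + b \<longrightarrow> two_independent_set E {v \<in> V. c v = i}))"

end

theory Submission
  imports Defs
begin

lemma greedy:
  fixes r :: "'a \<Rightarrow> nat" and Q :: "'a \<Rightarrow> ('a \<Rightarrow> 'b) \<Rightarrow> 'b \<Rightarrow> bool"
  assumes fin: "finite W"
  and ex: "\<And>v g. v \<in> W \<Longrightarrow> \<exists>x. Q v g x"
  and loc: "\<And>v g g' x. v \<in> W \<Longrightarrow> (\<And>u. r u < r v \<Longrightarrow> g u = g' u) \<Longrightarrow> Q v g x \<Longrightarrow> Q v g' x"
  shows "\<exists>f. \<forall>v\<in>W. Q v f (f v)"
proof -
  have "S \<subseteq> W \<longrightarrow> (\<exists>f. \<forall>v\<in>S. Q v f (f v))" if "finite S" for S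
    using that
  proof (induction S rule: finite_ranking_induct[where f = r])
    case empty
    then show ?case by auto
  next
    case (insert x S)
    show ?case
    proof
      assume sub: "insert x S \<subseteq> W"
      then obtain f where f: "\<forall>v\<in>S. Q v f (f v)" using insert by auto
      have "x \<in> W" using sub by auto
      then obtain a where a: "Q x f a" using ex[of x f] by blast
      define f' where "f' = f(x := a)"
      have fx: "f u = f' u" if "r u < r x" for u using that unfolding f'_def by auto
      have 1: "Q x f' (f' x)"
        using loc[of x f f' a, OF _ fx] a sub unfolding f'_def by auto
      have "Q v f' (f' v)" if "v \<in> S" "v \<noteq> x" for v
      proof -
        have "Q v f (f v)" using f that by auto
        moreover have "f u = f' u" if "r u < r v" for u
          using that insert(2)[OF \<open>v \<in> S\<close>] unfolding f'_def by auto
        ultimately show ?thesis using loc[of v f f' "f v"] sub that unfolding f'_def by auto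
      qed
      then show "\<exists>f. \<forall>v\<in>insert x S. Q v f (f v)" using 1 by (metis insertE)
    qed
  qed
  then show ?thesis using fin by auto
qed

lemma ordering:
  assumes "graph V E" "degenerate k V E"
  shows "\<exists>r :: 'a \<Rightarrow> nat. inj_on r V \<and> (\<forall>v\<in>V. card {u. E v u \<and> r u < r v} \<le> k)"
proof -
  have fin: "finite V" using assms(1) unfolding graph_def by auto
  have "S \<subseteq> V \<longrightarrow> (\<exists>r :: 'a \<Rightarrow> nat. inj_on r S \<and> r ` S \<subseteq> {..<card S} \<and>
      (\<forall>v\<in>S. card {u\<in>S. E v u \<and> r u < r v} \<le> k))" if "finite S" for S
    using that
  proof (induction S rule: finite_psubset_induct)
    case (psubset S)
    show ?case
    proof
      assume sub: "S \<subseteq> V"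
      show "\<exists>r :: 'a \<Rightarrow> nat. inj_on r S \<and> r ` S \<subseteq> {..<card S} \<and>
        (\<forall>v\<in>S. card {u\<in>S. E v u \<and> r u < r v} \<le> k)"
      proof (cases "S = {}")
        case True
        then show ?thesis by auto
      next
        case False
        then obtain w where w: "w \<in> S" "card {u \<in> S. E w u} \<le> k"
          using assms(2) sub unfolding degenerate_def by blast
        have ps: "S - {w} \<subset> S" using w by auto
        obtain r where r: "inj_on r (S - {w})" "r ` (S - {w}) \<subseteq> {..<card (S - {w})}"
          "\<forall>v\<in>S - {w}. card {u\<in>S - {w}. E v u \<and> r u < r v} \<le> k"
          using psubset.IH[OF ps] sub by auto
        have cS: "card (S - {w}) = card S - 1" using w psubset.hyps by auto
        have cpos: "card S > 0" using w psubset.hyps card_gt_0_iff by blast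
        define r' where "r' = r(w := card S - 1)"
        have lt: "r v < card S - 1" if "v \<in> S - {w}" for v using r(2) that cS by auto
        have "inj_on r' S"
        proof (rule inj_onI)
          fix x y assume "x \<in> S" "y \<in> S" "r' x = r' y"
          then show "x = y" using lt r(1) unfolding r'_def inj_on_def
            by (metis DiffI fun_upd_apply less_irrefl singletonD)
        qed
        moreover have "r' ` S \<subseteq> {..<card S}" using lt cpos unfolding r'_def by fastforce
        moreover have "card {u\<in>S. E v u \<and> r' u < r' v} \<le> k" if "v \<in> S" for v
        proof (cases "v = w")
          case True
          have "{u\<in>S. E v u \<and> r' u < r' v} \<subseteq> {u \<in> S. E w u}" using True by auto
          moreover have "finite {u \<in> S. E w u}" using psubset.hyps by auto
          ultimately have "card {u\<in>S. E v u \<and> r' u < r' v} \<le> card {u \<in> S. E w u}"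
            by (simp add: card_mono)
          then show ?thesis using w(2) by linarith
        next
          case False
          have "{u\<in>S. E v u \<and> r' u < r' v} \<subseteq> {u\<in>S - {w}. E v u \<and> r u < r v}"
            using False lt[of v] that unfolding r'_def by auto
          moreover have "finite {u\<in>S - {w}. E v u \<and> r u < r v}" using psubset.hyps by auto
          ultimately have "card {u\<in>S. E v u \<and> r' u < r' v} \<le> card {u\<in>S - {w}. E v u \<and> r u < r v}"
            by (simp add: card_mono)
          moreover have "card {u\<in>S - {w}. E v u \<and> r u < r v} \<le> k" using r(3) that False by blast
          ultimately show ?thesis by linarith
        qed
        ultimately show ?thesis by blast
      qed
    qed
  qed
  then obtain r :: "'a \<Rightarrow> nat" where r: "inj_on r V" "\<forall>v\<in>V. card {u\<in>V. E v u \<and> r u < r v} \<le> k"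
    using fin by blast
  have "{u. E v u \<and> r u < r v} = {u\<in>V. E v u \<and> r u < r v}" for v
    using assms(1) unfolding graph_def by auto
  then show ?thesis using r by auto
qed


lemma colorable_mono:
  assumes "colorable a b V E" "b \<le> b'"
  shows "colorable a b' V E"
proof -
  obtain c :: "'a \<Rightarrow> nat" where c: "\<forall>v\<in>V. c v < a + b" "\<forall>i<a. independent_set E {v \<in> V. c v = i}"
    "\<forall>i. a \<le> i \<and> i < a + b \<longrightarrow> two_independent_set E {v \<in> V. c v = i}"
    using assms(1) unfolding colorable_def by blast
  have "two_independent_set E {v \<in> V. c v = i}" if "a \<le> i" "i < a + b'" for i
  proof (cases "i < a + b")
    case True then show ?thesis using c(3) that by auto
  next
    case False
    then have "{v \<in> V. c v = i} = {}" using c(1) by fastforce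
    then show ?thesis unfolding two_independent_set_def by auto
  qed
  moreover have "\<forall>v\<in>V. c v < a + b'" using c(1) assms(2) by fastforce
  ultimately show ?thesis unfolding colorable_def using c(2) by blast
qed

lemma degree_sum:
  fixes r :: "'a \<Rightarrow> nat"
  assumes g: "graph V E" and inj: "inj_on r V" and bk: "\<forall>v\<in>V. card {u. E v u \<and> r u < r v} \<le> k"
  shows "(\<Sum>v\<in>V. card {u. E v u}) \<le> 2 * k * card V"
proof -
  have fin: "finite V" and ed: "\<And>x y. E x y \<Longrightarrow> x \<in> V \<and> y \<in> V" and sym: "\<And>x y. E x y \<Longrightarrow> E y x"
    and irr: "\<And>x. \<not> E x x" using g unfolding graph_def by auto
  define B where "B v = {u. E v u \<and> r u < r v}" for v
  define F where "F v = {u. E v u \<and> r v < r u}" for v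
  have finB: "finite (B v)" for v using fin ed unfolding B_def by (metis (no_types, lifting) finite_subset mem_Collect_eq subsetI)
  have finF: "finite (F v)" for v using fin ed unfolding F_def by (metis (no_types, lifting) finite_subset mem_Collect_eq subsetI)
  have "card {u. E v u} \<le> card (B v) + card (F v)" if "v \<in> V" for v
  proof -
    have "{u. E v u} \<subseteq> B v \<union> F v"
    proof
      fix u assume "u \<in> {u. E v u}"
      then have "E v u" by auto
      then have "u \<in> V" "u \<noteq> v" using ed irr by auto
      then have "r u \<noteq> r v" using inj that unfolding inj_on_def by metis
      then show "u \<in> B v \<union> F v" unfolding B_def F_def using \<open>E v u\<close> by auto
    qed
    then have "card {u. E v u} \<le> card (B v \<union> F v)" using finB finF by (simp add: card_mono)
    also have "\<dots> \<le> card (B v) + card (F v)" by (rule card_Un_le)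
    finally show ?thesis .
  qed
  then have "(\<Sum>v\<in>V. card {u. E v u}) \<le> (\<Sum>v\<in>V. card (B v) + card (F v))" by (rule sum_mono)
  also have "\<dots> = (\<Sum>v\<in>V. card (B v)) + (\<Sum>v\<in>V. card (F v))" by (rule sum.distrib)
  also have "(\<Sum>v\<in>V. card (F v)) = (\<Sum>v\<in>V. card (B v))"
  proof -
    have "(SIGMA v:V. B v) = prod.swap ` (SIGMA v:V. F v)"
    proof (rule set_eqI)
      fix p :: "'a \<times> 'a"
      obtain x y where p: "p = (x, y)" by fastforce
      show "p \<in> (SIGMA v:V. B v) \<longleftrightarrow> p \<in> prod.swap ` (SIGMA v:V. F v)"
        unfolding p B_def F_def using ed sym by (auto simp: image_iff)
    qed
    then have "card (SIGMA v:V. B v) = card (SIGMA v:V. F v)"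
      by (simp add: card_image)
    then show ?thesis using fin finB finF by simp
  qed
  also have "(\<Sum>v\<in>V. card (B v)) \<le> (\<Sum>v\<in>V. k)" using bk unfolding B_def by (intro sum_mono) auto
  finally show ?thesis by (simp add: algebra_simps)
qed


lemma construct:
  fixes r :: "'a \<Rightarrow> nat" and k D :: nat
  assumes g: "graph V E" and k1: "k \<ge> 1" and D1: "D \<ge> 1" and inj: "inj_on r V"
    and bk: "\<forall>v\<in>V. card {u. E v u \<and> r u < r v} \<le> k"
  shows "colorable k (2 * k * D + card {v\<in>V. D \<le> card {u. E v u}}) V E"
proof -
  have fin: "finite V" and ed: "\<And>x y. E x y \<Longrightarrow> x \<in> V \<and> y \<in> V" and sym: "\<And>x y. E x y \<Longrightarrow> E y x"
    and irr: "\<And>x. \<not> E x x" using g unfolding graph_def by auto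
  define H where "H = {v\<in>V. D \<le> card {u. E v u}}"
  define L where "L = V - H"
  define M where "M = 2 * k * D"
  define conf where "conf u v \<longleftrightarrow> E u v \<or> (\<exists>z. E u z \<and> E z v)" for u v
  have conf_sym: "conf u v \<Longrightarrow> conf v u" for u v using sym unfolding conf_def by blast
  have subV: "{u. E v u \<and> P u} \<subseteq> V" for v P using ed by auto
  have finE: "finite {u. E v u \<and> P u}" for v P using finite_subset[OF subV fin] .
  have finN: "finite {u. E v u}" for v using finE[of v "\<lambda>_. True"] by simp
  have degL: "card {u. E v u} < D" if "v \<in> L" for v using that unfolding L_def H_def by auto
  have rne: "r x \<noteq> r y" if "x \<in> V" "y \<in> V" "x \<noteq> y" for x y
    using inj that unfolding inj_on_def by blast
  have count: "card {u. u \<in> L \<and> r u < r v \<and> conf u v} < M"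
    if vL: "v \<in> L" and allL: "\<forall>u. E v u \<and> r u < r v \<longrightarrow> u \<in> L" for v
  proof -
    define B where "B w = {u. E w u \<and> r u < r w}" for w
    define F where "F = {z. E v z \<and> r v < r z}"
    have vV: "v \<in> V" using vL unfolding L_def by auto
    have sub: "{u. u \<in> L \<and> r u < r v \<and> conf u v} \<subseteq> B v \<union> (\<Union>z\<in>B v. {u. E z u}) \<union> (\<Union>z\<in>F. B z)"
    proof
      fix u assume u: "u \<in> {u. u \<in> L \<and> r u < r v \<and> conf u v}"
      then have uL: "u \<in> L" and ru: "r u < r v" and cf: "conf u v" by auto
      show "u \<in> B v \<union> (\<Union>z\<in>B v. {u. E z u}) \<union> (\<Union>z\<in>F. B z)"
      proof (cases "E u v")
        case True then have "u \<in> B v" using sym ru unfolding B_def by auto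
        then show ?thesis by blast
      next
        case False
        then obtain z where z: "E u z" "E z v" using cf unfolding conf_def by blast
        have "z \<noteq> v" using z irr by auto
        moreover have "z \<in> V" using ed z by auto
        ultimately have "r z \<noteq> r v" using rne vV by blast
        then consider "r z < r v" | "r v < r z" by linarith
        then show ?thesis
        proof cases
          case 1 then have "z \<in> B v" "u \<in> {u. E z u}" using z sym unfolding B_def by auto
          then show ?thesis by blast
        next
          case 2 then have "z \<in> F" "u \<in> B z" using z sym ru unfolding F_def B_def by auto
          then show ?thesis by blast
        qed
      qed
    qed
    have finB: "finite (B w)" for w unfolding B_def by (rule finE)
    have finF: "finite F" unfolding F_def by (rule finE)
    have BV: "B w \<subseteq> V" for w unfolding B_def by (rule subV)
    have cB: "card (B w) \<le> k" if "w \<in> V" for w using bk that unfolding B_def by auto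
    have "finite (B v \<union> (\<Union>z\<in>B v. {u. E z u}) \<union> (\<Union>z\<in>F. B z))"
      using finB finF finN by auto
    then have "card {u. u \<in> L \<and> r u < r v \<and> conf u v} \<le> card (B v \<union> (\<Union>z\<in>B v. {u. E z u}) \<union> (\<Union>z\<in>F. B z))"
      using sub by (rule card_mono)
    also have "\<dots> \<le> card (B v) + card (\<Union>z\<in>B v. {u. E z u}) + card (\<Union>z\<in>F. B z)"
      by (meson add_mono card_Un_le le_refl order_trans)
    also have "card (\<Union>z\<in>B v. {u. E z u}) \<le> k * (D - 1)"
    proof -
      have "card (\<Union>z\<in>B v. {u. E z u}) \<le> (\<Sum>z\<in>B v. card {u. E z u})" by (rule card_UN_le[OF finB])
      also have "\<dots> \<le> (\<Sum>z\<in>B v. D - 1)"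
      proof (rule sum_mono)
        fix z assume "z \<in> B v"
        then have "z \<in> L" using allL unfolding B_def by auto
        then show "card {u. E z u} \<le> D - 1" using degL by fastforce
      qed
      also have "\<dots> = card (B v) * (D - 1)" by simp
      also have "\<dots> \<le> k * (D - 1)" using cB[OF vV] by (rule mult_le_mono1)
      finally show ?thesis .
    qed
    also have "card (\<Union>z\<in>F. B z) \<le> (D - 1) * k"
    proof -
      have "card (\<Union>z\<in>F. B z) \<le> (\<Sum>z\<in>F. card (B z))" by (rule card_UN_le[OF finF])
      also have "\<dots> \<le> (\<Sum>z\<in>F. k)"
      proof (rule sum_mono)
        fix z assume "z \<in> F"
        then have "z \<in> V" using ed unfolding F_def by auto
        then show "card (B z) \<le> k" by (rule cB)
      qed
      also have "\<dots> = card F * k" by simp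
      also have "card F \<le> D - 1"
      proof -
        have "card F \<le> card {u. E v u}" unfolding F_def by (rule card_mono[OF finN]) auto
        then show ?thesis using degL[OF vL] by linarith
      qed
      then have "card F * k \<le> (D - 1) * k" by (rule mult_le_mono1)
      finally show ?thesis .
    qed
    also have "card (B v) \<le> k" by (rule cB[OF vV])
    finally have le: "card {u. u \<in> L \<and> r u < r v \<and> conf u v} \<le> k + k * (D - 1) + (D - 1) * k" by simp
    obtain d where d: "D = Suc d" using D1 by (cases D) auto
    have "k + k * (D - 1) + (D - 1) * k < M" unfolding M_def d using k1 by (simp add: algebra_simps)
    then show ?thesis using le by linarith
  qed
  define Q where "Q v g x \<longleftrightarrow> x < k + M \<and>
     (x < k \<longrightarrow> (\<forall>u. E v u \<and> u \<in> L \<and> r u < r v \<longrightarrow> g u \<noteq> x)) \<and>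
     (k \<le> x \<longrightarrow> (\<forall>u. E v u \<and> r u < r v \<longrightarrow> u \<in> L) \<and>
        (\<forall>u. u \<in> L \<and> r u < r v \<and> k \<le> g u \<and> conf u v \<longrightarrow> g u \<noteq> x))"
    for v and g :: "'a \<Rightarrow> nat" and x
  have finL: "finite L" using fin unfolding L_def by auto
  have "\<exists>f. \<forall>v\<in>L. Q v f (f v)"
  proof (rule greedy[where r = r, OF finL])
    fix v and g :: "'a \<Rightarrow> nat" assume v: "v \<in> L"
    have vV: "v \<in> V" using v unfolding L_def by auto
    show "\<exists>x. Q v g x"
    proof (cases "\<exists>i<k. \<forall>u. E v u \<and> u \<in> L \<and> r u < r v \<longrightarrow> g u \<noteq> i")
      case True
      then obtain i where i: "i < k" "\<forall>u. E v u \<and> u \<in> L \<and> r u < r v \<longrightarrow> g u \<noteq> i" by blast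
      have "Q v g i" unfolding Q_def using i by auto
      then show ?thesis by blast
    next
      case False
      define BL where "BL = {u. E v u \<and> u \<in> L \<and> r u < r v}"
      define Bv where "Bv = {u. E v u \<and> r u < r v}"
      have finBv: "finite Bv" unfolding Bv_def by (rule finE)
      have BLsub: "BL \<subseteq> Bv" unfolding BL_def Bv_def by auto
      have finBL: "finite BL" using finite_subset[OF BLsub finBv] .
      have "{..<k} \<subseteq> g ` BL" using False unfolding BL_def by force
      then have "card {..<k} \<le> card (g ` BL)" using finBL by (meson card_mono finite_imageI)
      also have "\<dots> \<le> card BL" using finBL by (rule card_image_le)
      finally have k1': "k \<le> card BL" by simp
      have "card Bv \<le> k" using bk vV unfolding Bv_def by auto
      then have "card BL = card Bv" using k1' card_mono[OF finBv BLsub] by linarith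
      then have "BL = Bv" using card_subset_eq[OF finBv BLsub] by blast
      then have allL: "\<forall>u. E v u \<and> r u < r v \<longrightarrow> u \<in> L" unfolding BL_def Bv_def by blast
      define C where "C = {u. u \<in> L \<and> r u < r v \<and> conf u v}"
      have finC: "finite C" using finL unfolding C_def by auto
      have "card C < M" using count[OF v allL] unfolding C_def .
      then have cgC: "card (g ` C) < M" using card_image_le[OF finC, of g] by linarith
      have "\<not> {k..<k+M} \<subseteq> g ` C"
      proof
        assume "{k..<k+M} \<subseteq> g ` C"
        then have "card {k..<k+M} \<le> card (g ` C)" using finC by (meson card_mono finite_imageI)
        then show False using cgC by simp
      qed
      then obtain x where x: "x \<in> {k..<k+M}" "x \<notin> g ` C" by blast
      have "Q v g x" unfolding Q_def using x allL unfolding C_def by auto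
      then show ?thesis by blast
    qed
  next
    fix v and g g' :: "'a \<Rightarrow> nat" and x
    assume "v \<in> L" and eq: "\<And>u. r u < r v \<Longrightarrow> g u = g' u" and q: "Q v g x"
    show "Q v g' x" using q eq unfolding Q_def by auto
  qed
  then obtain f where f: "\<forall>v\<in>L. Q v f (f v)" by blast
  have finH: "finite H" using fin unfolding H_def by auto
  obtain h where h: "bij_betw h H {0..<card H}" using ex_bij_betw_finite_nat[OF finH] by blast
  have hlt: "h v < card H" if "v \<in> H" for v using h that bij_betwE by fastforce
  have hinj: "h x = h y \<Longrightarrow> x \<in> H \<Longrightarrow> y \<in> H \<Longrightarrow> x = y" for x y
    using inj_onD[OF bij_betw_imp_inj_on[OF h]] by blast
  define c where "c v = (if v \<in> H then k + M + h v else f v)" for v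
  have cL: "v \<in> L \<and> c v = f v \<and> f v < k + M" if "v \<in> V" "v \<notin> H" for v
  proof -
    have vL: "v \<in> L" using that unfolding L_def by blast
    then have "Q v f (f v)" using f by blast
    then have "f v < k + M" unfolding Q_def by blast
    then show ?thesis using vL that(2) unfolding c_def by simp
  qed
  have cH: "v \<in> H \<Longrightarrow> c v = k + M + h v" for v unfolding c_def by auto
  have ok1: "\<forall>v\<in>V. c v < k + (M + card H)"
    using cL cH hlt by fastforce
  have ok2: "\<forall>i<k. independent_set E {v \<in> V. c v = i}"
  proof (intro allI impI)
    fix i assume i: "i < k"
    show "independent_set E {v \<in> V. c v = i}" unfolding independent_set_def
    proof (intro ballI notI)
      fix x y assume x: "x \<in> {v \<in> V. c v = i}" and y: "y \<in> {v \<in> V. c v = i}" and exy: "E x y"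
      have xH: "x \<notin> H" using x cH i by fastforce
      have yH: "y \<notin> H" using y cH i by fastforce
      have xL: "x \<in> L" "f x = i" using cL[OF _ xH] x by auto
      have yL: "y \<in> L" "f y = i" using cL[OF _ yH] y by auto
      have "x \<noteq> y" using exy irr by auto
      then have "r x \<noteq> r y" using rne x y by auto
      then consider "r x < r y" | "r y < r x" by linarith
      then show False
      proof cases
        case 1
        have "Q y f (f y)" using f yL by auto
        then have "\<forall>u. E y u \<and> u \<in> L \<and> r u < r y \<longrightarrow> f u \<noteq> f y" using yL i unfolding Q_def by blast
        then show False using 1 xL yL sym[OF exy] by auto
      next
        case 2
        have "Q x f (f x)" using f xL by auto
        then have "\<forall>u. E x u \<and> u \<in> L \<and> r u < r x \<longrightarrow> f u \<noteq> f x" using xL i unfolding Q_def by blast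
        then show False using 2 xL yL exy by auto
      qed
    qed
  qed
  have ok3: "\<forall>i. k \<le> i \<and> i < k + (M + card H) \<longrightarrow> two_independent_set E {v \<in> V. c v = i}"
  proof (intro allI impI)
    fix i assume i: "k \<le> i \<and> i < k + (M + card H)"
    show "two_independent_set E {v \<in> V. c v = i}" unfolding two_independent_set_def
    proof (intro ballI impI)
      fix x y assume x: "x \<in> {v \<in> V. c v = i}" and y: "y \<in> {v \<in> V. c v = i}" and xy: "x \<noteq> y"
      have "\<not> conf x y"
      proof
        assume cf: "conf x y"
        show False
        proof (cases "x \<in> H")
          case True
          then have "i \<ge> k + M" using x cH by auto
          then have yH: "y \<in> H" using y cL by fastforce
          then show False using True x y cH hinj xy by auto
        next
          case False
          then have xL: "x \<in> L" "f x = i" "i < k + M" using cL x by auto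
          then have yH: "y \<notin> H" using y cH by fastforce
          then have yL: "y \<in> L" "f y = i" using cL y by auto
          have "r x \<noteq> r y" using rne x y xy by auto
          then consider "r x < r y" | "r y < r x" by linarith
          then show False
          proof cases
            case 1
            have "Q y f (f y)" using f yL by auto
            then have "\<forall>u. u \<in> L \<and> r u < r y \<and> k \<le> f u \<and> conf u y \<longrightarrow> f u \<noteq> f y" using yL i unfolding Q_def by blast
            then show False using 1 xL yL i cf by auto
          next
            case 2
            have "Q x f (f x)" using f xL by auto
            then have "\<forall>u. u \<in> L \<and> r u < r x \<and> k \<le> f u \<and> conf u x \<longrightarrow> f u \<noteq> f x" using xL i unfolding Q_def by blast
            then show False using 2 xL yL i conf_sym[OF cf] by auto
          qed
        qed
      qed
      then show "\<not> E x y \<and> \<not> (\<exists>z. E x z \<and> E z y)" unfolding conf_def by blast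
    qed
  qed
  have "colorable k (M + card H) V E" unfolding colorable_def using ok1 ok2 ok3 by blast
  then show ?thesis unfolding M_def H_def .
qed


theorem mainTheorem12:
  fixes V :: "'a set" and E :: "'a \<Rightarrow> 'a \<Rightarrow> bool" and k b :: nat
  assumes "k \<ge> 1"
    and "graph V E"
    and "degenerate k V E"
    and "real b \<ge> 4 * real k * sqrt (real k + 1) * sqrt (real (card V))"
  shows "colorable k b V E"
proof -
  have fin: "finite V" using assms(2) unfolding graph_def by auto
  define n where "n = card V"
  show ?thesis
  proof (cases "n = 0")
    case True
    then have "V = {}" using fin unfolding n_def by simp
    then show ?thesis unfolding colorable_def independent_set_def two_independent_set_def by auto
  next
    case False
    then have n1: "n \<ge> 1" by simp
    obtain r :: "'a \<Rightarrow> nat" where r: "inj_on r V" "\<forall>v\<in>V. card {u. E v u \<and> r u < r v} \<le> k"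
      using ordering[OF assms(2,3)] by blast
    define s where "s = sqrt (real n)"
    define t where "t = sqrt (real k + 1)"
    define D where "D = nat \<lceil>s\<rceil>"
    have s1: "s \<ge> 1" unfolding s_def using n1 by simp
    have Ds: "real D \<ge> s" "real D < s + 1" unfolding D_def using s1
      by (simp_all add: ceiling_correct) linarith
    have D1: "D \<ge> 1" using Ds s1 by linarith
    define H where "H = {v\<in>V. D \<le> card {u. E v u}}"
    have col: "colorable k (2 * k * D + card H) V E"
      unfolding H_def using construct[OF assms(2,1) D1 r] .
    have "card H * D \<le> (\<Sum>v\<in>H. card {u. E v u})"
      using sum_mono[of H "\<lambda>_. D" "\<lambda>v. card {u. E v u}"] unfolding H_def by auto
    also have "\<dots> \<le> (\<Sum>v\<in>V. card {u. E v u})"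
      by (rule sum_mono2[OF fin]) (auto simp: H_def)
    also have "\<dots> \<le> 2 * k * n" unfolding n_def using degree_sum[OF assms(2) r] .
    finally have hD: "real (card H) * real D \<le> 2 * real k * real n"
      by (metis of_nat_le_iff of_nat_mult of_nat_numeral)
    have ns: "real n = s * s" unfolding s_def by simp
    have "real (card H) * s \<le> real (card H) * real D" using Ds by (simp add: mult_left_mono)
    also have "\<dots> \<le> 2 * real k * s * s" using hD ns by simp
    finally have "real (card H) * s \<le> (2 * real k * s) * s" by simp
    then have hc: "real (card H) \<le> 2 * real k * s" using s1 by simp
    have t1: "t \<ge> 1" unfolding t_def by simp
    have k0: "real k \<ge> 1" using assms(1) by simp
    have goal: "real (2 * k * D + card H) \<le> 4 * real k * t * s"
    proof (cases "n = 1")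
      case True
      then have "s = 1" unfolding s_def by simp
      then have "D = 1" unfolding D_def by simp
      then have "real (2 * k * D + card H) \<le> 4 * real k" using hc \<open>s = 1\<close> by simp
      also have "\<dots> \<le> 4 * real k * t * s" using \<open>s = 1\<close> t1 k0 by simp
      finally show ?thesis .
    next
      case False
      then have n2: "real n \<ge> 2" using n1 by simp
      have sq2: "sqrt 2 \<ge> 1.4" by (rule real_le_rsqrt) (simp add: power2_eq_square)
      have s2: "s \<ge> 1.4" unfolding s_def using sq2 real_sqrt_le_mono[OF n2] by linarith
      have t2: "t \<ge> 1.4" unfolding t_def using sq2 real_sqrt_le_mono[of 2 "real k + 1"] k0 by linarith
      have "2 * s + 1 \<le> 2 * t * s"
      proof -
        have "(t - 1.4) * s \<ge> 0" using t2 s2 by simp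
        then have "t * s \<ge> 1.4 * s" by (simp add: algebra_simps)
        then show ?thesis using s2 by linarith
      qed
      then have "real k * (2 * s + 1) \<le> real k * (2 * t * s)" using k0 by (simp add: mult_left_mono)
      moreover have "real (2 * k * D + card H) \<le> 2 * real k * (s + 1) + 2 * real k * s"
      proof -
        have "real D \<le> s + 1" using Ds by simp
        then have "2 * real k * real D \<le> 2 * real k * (s + 1)" using k0 by (simp add: mult_left_mono)
        then show ?thesis using hc by simp
      qed
      ultimately show ?thesis by (simp add: algebra_simps)
    qed
    have "real (2 * k * D + card H) \<le> real b"
      using goal assms(4) unfolding s_def t_def n_def by (simp add: algebra_simps)
    then have "2 * k * D + card H \<le> b" by linarith
    then show ?thesis using colorable_mono[OF col] by blast
  qed
qed

end
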